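(* Let $A$ be a left brace and let $B=\{a\in A:\ (b+c)a=ba+ca-a \text{ for all } b,c\in A\}$. Then $B=\{a\in A: a^{-1}(b+c)a=a^{-1}ba+a^{-1}ca \text{ for all } b,c\in A\}$, and $B$ is a subbrace of $A$ (a subgroup of both $(A,+)$ and $(A,\cdot)$) which is a two-sided brace.
   Context: A left brace is a set $A$ with two operations $+,\cdot$ such that $(A,+)$ is an abelian group, $(A,\cdot)$ is a group and $a(b+c)+a=ab+ac$ for all $a,b,c$. A two-sided brace is a left brace that additionally satisfies $(b+c)a+a=ba+ca$ for all $a,b,c$. *)

theory Defs
  imports "HOL-Algebra.Group"
begin

text \<open>A left brace is given by two group structures on the same carrier:
  P (the additive group, written with mult field of P) and M (the multiplicative group).\<close>

definition left_brace :: "('a, 'b) monoid_scheme \<Rightarrow> ('a, 'c) monoid_scheme \<Rightarrow> bool" where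
  "left_brace P M \<longleftrightarrow> comm_group P \<and> group M \<and> carrier P = carrier M \<and>
     (\<forall>a\<in>carrier M. \<forall>b\<in>carrier M. \<forall>c\<in>carrier M.
        (a \<otimes>\<^bsub>M\<^esub> (b \<otimes>\<^bsub>P\<^esub> c)) \<otimes>\<^bsub>P\<^esub> a
          = (a \<otimes>\<^bsub>M\<^esub> b) \<otimes>\<^bsub>P\<^esub> (a \<otimes>\<^bsub>M\<^esub> c))"

definition two_sided_brace :: "('a, 'b) monoid_scheme \<Rightarrow> ('a, 'c) monoid_scheme \<Rightarrow> bool" where
  "two_sided_brace P M \<longleftrightarrow> left_brace P M \<and>
     (\<forall>a\<in>carrier M. \<forall>b\<in>carrier M. \<forall>c\<in>carrier M.
        ((b \<otimes>\<^bsub>P\<^esub> c) \<otimes>\<^bsub>M\<^esub> a) \<otimes>\<^bsub>P\<^esub> a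
          = (b \<otimes>\<^bsub>M\<^esub> a) \<otimes>\<^bsub>P\<^esub> (c \<otimes>\<^bsub>M\<^esub> a))"

end

theory Submission
  imports Defs
begin

locale lbr = P: comm_group P + M: group M for P :: "('a,'b) monoid_scheme" and M :: "('a,'c) monoid_scheme" +
  assumes car: "carrier P = carrier M"
  and br: "\<And>a b c. a \<in> carrier M \<Longrightarrow> b \<in> carrier M \<Longrightarrow> c \<in> carrier M \<Longrightarrow>
        (a \<otimes>\<^bsub>M\<^esub> (b \<otimes>\<^bsub>P\<^esub> c)) \<otimes>\<^bsub>P\<^esub> a
          = (a \<otimes>\<^bsub>M\<^esub> b) \<otimes>\<^bsub>P\<^esub> (a \<otimes>\<^bsub>M\<^esub> c)"
begin

abbreviation pl (infixl "\<boxplus>" 65) where "x \<boxplus> y \<equiv> x \<otimes>\<^bsub>P\<^esub> y"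
abbreviation ml (infixl "\<boxtimes>" 70) where "x \<boxtimes> y \<equiv> x \<otimes>\<^bsub>M\<^esub> y"
abbreviation "neg x \<equiv> inv\<^bsub>P\<^esub> x"
abbreviation "A \<equiv> carrier M"

lemma carP: "carrier P = A" by (rule car)
lemma pcl[simp]: "x \<in> A \<Longrightarrow> y \<in> A \<Longrightarrow> x \<boxplus> y \<in> A" using P.m_closed car by auto
lemma ncl[simp]: "x \<in> A \<Longrightarrow> neg x \<in> A" using P.inv_closed car by auto
lemma zcl[simp]: "\<one>\<^bsub>P\<^esub> \<in> A" using P.one_closed car by auto
lemmas pax = P.m_assoc[unfolded carP] P.m_comm[unfolded carP] P.m_lcomm[unfolded carP]
lemma pl_one[simp]: "x \<in> A \<Longrightarrow> x \<boxplus> \<one>\<^bsub>P\<^esub> = x" "x \<in> A \<Longrightarrow> \<one>\<^bsub>P\<^esub> \<boxplus> x = x" using car by auto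
lemma pl_inv[simp]: "x \<in> A \<Longrightarrow> x \<boxplus> neg x = \<one>\<^bsub>P\<^esub>" "x \<in> A \<Longrightarrow> neg x \<boxplus> x = \<one>\<^bsub>P\<^esub>"
   "x \<in> A \<Longrightarrow> y \<in> A \<Longrightarrow> x \<boxplus> (neg x \<boxplus> y) = y" "x \<in> A \<Longrightarrow> y \<in> A \<Longrightarrow> neg x \<boxplus> (x \<boxplus> y) = y"
  using car P.inv_solve_left P.m_assoc by (auto simp: P.r_inv P.l_inv simp flip: P.m_assoc)
lemma pcancel: "x \<in> A \<Longrightarrow> y \<in> A \<Longrightarrow> z \<in> A \<Longrightarrow> (x \<boxplus> y = x \<boxplus> z) = (y = z)"
  using P.Units_l_cancel P.Units_eq car by auto

lemma one_eq: "\<one>\<^bsub>P\<^esub> = \<one>\<^bsub>M\<^esub>"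
proof -
  have "\<one>\<^bsub>P\<^esub> \<boxplus> \<one>\<^bsub>M\<^esub> = \<one>\<^bsub>P\<^esub> \<boxplus> \<one>\<^bsub>P\<^esub>"
    using br[of "\<one>\<^bsub>M\<^esub>" "\<one>\<^bsub>P\<^esub>" "\<one>\<^bsub>P\<^esub>"] P.one_closed by simp
  then show ?thesis using pcancel by (metis M.one_closed zcl)
qed

lemma br': "a \<in> A \<Longrightarrow> b \<in> A \<Longrightarrow> c \<in> A \<Longrightarrow> a \<boxtimes> (b \<boxplus> c) = (a \<boxtimes> b \<boxplus> a \<boxtimes> c) \<boxplus> neg a"
  using br[of a b c]
  by (metis M.m_closed P.inv_closed P.m_closed P.r_inv P.r_one P.m_assoc carP)

definition "lam a b = a \<boxtimes> b \<boxplus> neg a"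

lemma lam_closed[simp]: "a \<in> A \<Longrightarrow> b \<in> A \<Longrightarrow> lam a b \<in> A"
  unfolding lam_def by simp

lemma mul_eq: "x \<in> A \<Longrightarrow> y \<in> A \<Longrightarrow> x \<boxtimes> y = x \<boxplus> lam x y"
  unfolding lam_def by (simp add: pax)

lemma lam_add: "a \<in> A \<Longrightarrow> b \<in> A \<Longrightarrow> c \<in> A \<Longrightarrow> lam a (b \<boxplus> c) = lam a b \<boxplus> lam a c"
  unfolding lam_def using br'[of a b c] by (simp add: pax)

lemma lam_zero: "a \<in> A \<Longrightarrow> lam a \<one>\<^bsub>P\<^esub> = \<one>\<^bsub>P\<^esub>"
proof -
  assume a: "a \<in> A"
  have "a \<boxtimes> \<one>\<^bsub>P\<^esub> = a" using a by (simp add: one_eq)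
  then show ?thesis using a unfolding lam_def by simp
qed

lemma lam_neg: "a \<in> A \<Longrightarrow> y \<in> A \<Longrightarrow> lam a (neg y) = neg (lam a y)"
proof -
  assume a: "a \<in> A" "y \<in> A"
  have "lam a y \<boxplus> lam a (neg y) = \<one>\<^bsub>P\<^esub>"
    using lam_add[of a y "neg y"] a lam_zero by simp
  then show ?thesis using a
    by (metis P.inv_closed P.inv_equality P.m_comm carP lam_closed)
qed


lemma pinv_mult[simp]: "x \<in> A \<Longrightarrow> y \<in> A \<Longrightarrow> neg (x \<boxplus> y) = neg x \<boxplus> neg y"
  using P.inv_mult car by auto
lemma pinv_inv[simp]: "x \<in> A \<Longrightarrow> neg (neg x) = x" using P.inv_inv car by auto
lemma pinv_one[simp]: "neg \<one>\<^bsub>P\<^esub> = \<one>\<^bsub>P\<^esub>" by simp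

definition "R a \<longleftrightarrow> (\<forall>b\<in>A. \<forall>c\<in>A. (b \<boxplus> c) \<boxtimes> a = (b \<boxtimes> a \<boxplus> c \<boxtimes> a) \<boxplus> neg a)"
definition "Rl a \<longleftrightarrow> (\<forall>b\<in>A. \<forall>c\<in>A. lam (b \<boxplus> c) a = (lam b a \<boxplus> lam c a) \<boxplus> neg a)"

lemma R_Rl: assumes a: "a \<in> A" shows "R a \<longleftrightarrow> Rl a"
proof -
  have "(b \<boxplus> c) \<boxtimes> a = (b \<boxtimes> a \<boxplus> c \<boxtimes> a) \<boxplus> neg a \<longleftrightarrow>
        lam (b \<boxplus> c) a = (lam b a \<boxplus> lam c a) \<boxplus> neg a" if bc: "b \<in> A" "c \<in> A" for b c
  proof -
    have "(b \<boxtimes> a \<boxplus> c \<boxtimes> a) \<boxplus> neg a = (b \<boxplus> c) \<boxplus> ((lam b a \<boxplus> lam c a) \<boxplus> neg a)"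
      using a bc by (simp add: mul_eq pax)
    then show ?thesis using a bc by (simp add: mul_eq[of "b \<boxplus> c" a] pcancel)
  qed
  then show ?thesis unfolding R_def Rl_def by simp
qed

lemma Rl_add: "a \<in> A \<Longrightarrow> d \<in> A \<Longrightarrow> Rl a \<Longrightarrow> Rl d \<Longrightarrow> Rl (a \<boxplus> d)"
  unfolding Rl_def by (simp add: lam_add pax)

lemma Rl_neg: "a \<in> A \<Longrightarrow> Rl a \<Longrightarrow> Rl (neg a)"
  unfolding Rl_def by (simp add: lam_neg pax)

lemma mlone[simp]: "x \<in> A \<Longrightarrow> x \<boxtimes> \<one>\<^bsub>P\<^esub> = x" "x \<in> A \<Longrightarrow> \<one>\<^bsub>P\<^esub> \<boxtimes> x = x"
  by (simp_all add: one_eq)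

lemma c1[simp]: "x \<in> A \<Longrightarrow> y \<in> A \<Longrightarrow> x \<boxplus> (y \<boxplus> neg x) = y" "x \<in> A \<Longrightarrow> y \<in> A \<Longrightarrow> neg x \<boxplus> (y \<boxplus> x) = y"
  by (metis pax pl_inv pcl ncl)+
lemma c2[simp]: "x \<in> A \<Longrightarrow> y \<in> A \<Longrightarrow> z \<in> A \<Longrightarrow> x \<boxplus> (y \<boxplus> (z \<boxplus> neg x)) = y \<boxplus> z"
   "x \<in> A \<Longrightarrow> y \<in> A \<Longrightarrow> z \<in> A \<Longrightarrow> neg x \<boxplus> (y \<boxplus> (z \<boxplus> x)) = y \<boxplus> z"
  by (metis pax pl_inv pcl ncl)+
lemma c3[simp]: "x \<in> A \<Longrightarrow> y \<in> A \<Longrightarrow> z \<in> A \<Longrightarrow> w \<in> A \<Longrightarrow> x \<boxplus> (y \<boxplus> (z \<boxplus> (w \<boxplus> neg x))) = y \<boxplus> (z \<boxplus> w)"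
   "x \<in> A \<Longrightarrow> y \<in> A \<Longrightarrow> z \<in> A \<Longrightarrow> w \<in> A \<Longrightarrow> neg x \<boxplus> (y \<boxplus> (z \<boxplus> (w \<boxplus> x))) = y \<boxplus> (z \<boxplus> w)"
  by (simp_all add: pax(3)[of x y] pax(3)[of "neg x" y])

lemma R_one: "R \<one>\<^bsub>M\<^esub>"
  unfolding R_def by (simp flip: one_eq)

lemma solve: "u \<in> A \<Longrightarrow> y \<in> A \<Longrightarrow> d \<in> A \<Longrightarrow> d = (u \<boxplus> y) \<boxplus> neg d \<Longrightarrow> y = (d \<boxplus> d) \<boxplus> neg u"
proof -
  assume h: "u \<in> A" "y \<in> A" "d \<in> A" "d = (u \<boxplus> y) \<boxplus> neg d"
  have "d \<boxplus> d = ((u \<boxplus> y) \<boxplus> neg d) \<boxplus> d" using h(4) by (rule arg_cong[where f="\<lambda>z. z \<boxplus> d"])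
  also have "\<dots> = u \<boxplus> y" using h(1-3) by (simp add: pax)
  finally show ?thesis using h(1-3) by (simp add: pax)
qed

lemma R_neg: "d \<in> A \<Longrightarrow> x \<in> A \<Longrightarrow> R d \<Longrightarrow> neg x \<boxtimes> d = (d \<boxplus> d) \<boxplus> neg (x \<boxtimes> d)"
proof -
  assume h: "d \<in> A" "x \<in> A" "R d"
  have e1: "(x \<boxplus> neg x) \<boxtimes> d = (x \<boxtimes> d \<boxplus> neg x \<boxtimes> d) \<boxplus> neg d" using h ncl[OF h(2)] unfolding R_def by blast
  have e2: "(x \<boxplus> neg x) \<boxtimes> d = d" using h by simp
  have "d = (x \<boxtimes> d \<boxplus> neg x \<boxtimes> d) \<boxplus> neg d" using e1 e2 by metis
  then show ?thesis using h solve by simp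
qed

lemma R_mul: "a \<in> A \<Longrightarrow> d \<in> A \<Longrightarrow> R a \<Longrightarrow> R d \<Longrightarrow> R (a \<boxtimes> d)"
proof -
  assume h: "a \<in> A" "d \<in> A" "R a" "R d"
  have "(b \<boxplus> c) \<boxtimes> (a \<boxtimes> d) = (b \<boxtimes> (a \<boxtimes> d) \<boxplus> c \<boxtimes> (a \<boxtimes> d)) \<boxplus> neg (a \<boxtimes> d)"
    if bc: "b \<in> A" "c \<in> A" for b c
  proof -
    have "(b \<boxplus> c) \<boxtimes> (a \<boxtimes> d) = ((b \<boxplus> c) \<boxtimes> a) \<boxtimes> d" using h bc by (simp add: M.m_assoc)
    also have "\<dots> = ((b \<boxtimes> a \<boxplus> c \<boxtimes> a) \<boxplus> neg a) \<boxtimes> d" using h bc unfolding R_def by simp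
    also have "\<dots> = ((b \<boxtimes> a \<boxplus> c \<boxtimes> a) \<boxtimes> d \<boxplus> neg a \<boxtimes> d) \<boxplus> neg d"
      using h bc unfolding R_def by simp
    also have "\<dots> = (((b \<boxtimes> a) \<boxtimes> d \<boxplus> (c \<boxtimes> a) \<boxtimes> d) \<boxplus> neg d \<boxplus> ((d \<boxplus> d) \<boxplus> neg (a \<boxtimes> d))) \<boxplus> neg d"
      using h bc R_neg[of d a] unfolding R_def by simp
    also have "\<dots> = (b \<boxtimes> (a \<boxtimes> d) \<boxplus> c \<boxtimes> (a \<boxtimes> d)) \<boxplus> neg (a \<boxtimes> d)"
      using h bc by (simp add: M.m_assoc pax)
    finally show ?thesis .
  qed
  then show ?thesis unfolding R_def by simp
qed

lemma R_inv: "a \<in> A \<Longrightarrow> R a \<Longrightarrow> R (inv\<^bsub>M\<^esub> a)"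
proof -
  assume h: "a \<in> A" "R a"
  let ?i = "inv\<^bsub>M\<^esub> a"
  have i: "?i \<in> A" using h by simp
  have "(b \<boxplus> c) \<boxtimes> ?i = (b \<boxtimes> ?i \<boxplus> c \<boxtimes> ?i) \<boxplus> neg ?i"
    if bc: "b \<in> A" "c \<in> A" for b c
  proof -
    let ?u = "b \<boxtimes> ?i" and ?v = "c \<boxtimes> ?i"
    have uv: "?u \<in> A" "?v \<in> A" "?u \<boxtimes> a = b" "?v \<boxtimes> a = c" using h bc by (simp_all add: M.m_assoc)
    have ia: "?i \<boxtimes> a = \<one>\<^bsub>P\<^esub>" using h by (simp add: one_eq)
    have "((?u \<boxplus> ?v) \<boxplus> neg ?i) \<boxtimes> a = ((?u \<boxplus> ?v) \<boxtimes> a \<boxplus> neg ?i \<boxtimes> a) \<boxplus> neg a"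
      using h bc uv i unfolding R_def by simp
    also have "\<dots> = (((b \<boxplus> c) \<boxplus> neg a) \<boxplus> ((a \<boxplus> a) \<boxplus> neg (?i \<boxtimes> a))) \<boxplus> neg a"
      using h bc uv i R_neg[of a ?i] unfolding R_def by simp
    also have "\<dots> = b \<boxplus> c" using h bc ia by (simp add: pax)
    finally have e: "((?u \<boxplus> ?v) \<boxplus> neg ?i) \<boxtimes> a = b \<boxplus> c" .
    have "(b \<boxplus> c) \<boxtimes> ?i = (((?u \<boxplus> ?v) \<boxplus> neg ?i) \<boxtimes> a) \<boxtimes> ?i" using e by simp
    also have "\<dots> = (?u \<boxplus> ?v) \<boxplus> neg ?i" using h uv i by (simp add: M.m_assoc)
    finally show ?thesis .
  qed
  then show ?thesis unfolding R_def by simp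
qed

lemma conj_iff: assumes h: "a \<in> A" "b \<in> A" "c \<in> A"
  shows "(inv\<^bsub>M\<^esub> a \<boxtimes> (b \<boxplus> c) \<boxtimes> a = (inv\<^bsub>M\<^esub> a \<boxtimes> b \<boxtimes> a) \<boxplus> (inv\<^bsub>M\<^esub> a \<boxtimes> c \<boxtimes> a))
     \<longleftrightarrow> ((b \<boxplus> c) \<boxtimes> a = (b \<boxtimes> a \<boxplus> c \<boxtimes> a) \<boxplus> neg a)"
proof -
  let ?i = "inv\<^bsub>M\<^esub> a"
  have 1: "a \<boxtimes> (?i \<boxtimes> x \<boxtimes> a) = x \<boxtimes> a" if "x \<in> A" for x
    using h that by (simp add: M.m_assoc flip: M.m_assoc[of a ?i])
  have 2: "a \<boxtimes> ((?i \<boxtimes> b \<boxtimes> a) \<boxplus> (?i \<boxtimes> c \<boxtimes> a)) = (b \<boxtimes> a \<boxplus> c \<boxtimes> a) \<boxplus> neg a"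
    using h br' 1 by simp
  have "(?i \<boxtimes> (b \<boxplus> c) \<boxtimes> a = (?i \<boxtimes> b \<boxtimes> a) \<boxplus> (?i \<boxtimes> c \<boxtimes> a)) \<longleftrightarrow>
        a \<boxtimes> (?i \<boxtimes> (b \<boxplus> c) \<boxtimes> a) = a \<boxtimes> ((?i \<boxtimes> b \<boxtimes> a) \<boxplus> (?i \<boxtimes> c \<boxtimes> a))"
    using h M.Units_l_cancel M.Units_eq by simp
  then show ?thesis using 1[of "b \<boxplus> c"] 2 h by simp
qed

end

theorem mainTheorem11:
  fixes P :: "('a, 'b) monoid_scheme" and M :: "('a, 'c) monoid_scheme"
  assumes "left_brace P M"
  defines "B \<equiv> {a \<in> carrier M. \<forall>b\<in>carrier M. \<forall>c\<in>carrier M.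
              (b \<otimes>\<^bsub>P\<^esub> c) \<otimes>\<^bsub>M\<^esub> a
                = ((b \<otimes>\<^bsub>M\<^esub> a) \<otimes>\<^bsub>P\<^esub> (c \<otimes>\<^bsub>M\<^esub> a)) \<otimes>\<^bsub>P\<^esub> inv\<^bsub>P\<^esub> a}"
  shows "(B = {a \<in> carrier M. \<forall>b\<in>carrier M. \<forall>c\<in>carrier M.
              inv\<^bsub>M\<^esub> a \<otimes>\<^bsub>M\<^esub> (b \<otimes>\<^bsub>P\<^esub> c) \<otimes>\<^bsub>M\<^esub> a
                = (inv\<^bsub>M\<^esub> a \<otimes>\<^bsub>M\<^esub> b \<otimes>\<^bsub>M\<^esub> a)
                  \<otimes>\<^bsub>P\<^esub> (inv\<^bsub>M\<^esub> a \<otimes>\<^bsub>M\<^esub> c \<otimes>\<^bsub>M\<^esub> a)})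
      \<and> subgroup B P \<and> subgroup B M
      \<and> two_sided_brace (P\<lparr>carrier := B\<rparr>) (M\<lparr>carrier := B\<rparr>)"
proof -
  interpret lbr P M
    using assms(1) unfolding left_brace_def
    by (intro lbr.intro lbr_axioms.intro) (auto simp: comm_group.axioms group.axioms)
  have BR: "B = {a \<in> A. R a}" unfolding B_def R_def by simp
  have sub: "B \<subseteq> A" using BR by auto
  have sP: "subgroup B P"
  proof (rule P.subgroupI)
    show "B \<subseteq> carrier P" using sub car by simp
    show "B \<noteq> {}" using BR R_one by auto
    show "a \<in> B \<Longrightarrow> neg a \<in> B" for a using BR R_Rl Rl_neg by auto
    show "a \<in> B \<Longrightarrow> d \<in> B \<Longrightarrow> a \<boxplus> d \<in> B" for a d using BR R_Rl Rl_add by auto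
  qed
  have sM: "subgroup B M"
  proof (rule M.subgroupI)
    show "B \<subseteq> carrier M" using sub by simp
    show "B \<noteq> {}" using BR R_one by auto
    show "a \<in> B \<Longrightarrow> inv\<^bsub>M\<^esub> a \<in> B" for a using BR R_inv by auto
    show "a \<in> B \<Longrightarrow> d \<in> B \<Longrightarrow> a \<boxtimes> d \<in> B" for a d using BR R_mul by auto
  qed
  have cg: "comm_group (P\<lparr>carrier := B\<rparr>)"
    using group.group_comm_groupI[OF subgroup.subgroup_is_group[OF sP P.is_group]] sub pax(2)
    by auto
  have gM: "group (M\<lparr>carrier := B\<rparr>)" using subgroup.subgroup_is_group[OF sM M.is_group] .
  have ts: "two_sided_brace (P\<lparr>carrier := B\<rparr>) (M\<lparr>carrier := B\<rparr>)"
    unfolding two_sided_brace_def left_brace_def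
  proof (intro conjI cg gM ballI)
    show "carrier (P\<lparr>carrier := B\<rparr>) = carrier (M\<lparr>carrier := B\<rparr>)" by simp
  next
    fix a b c assume "a \<in> carrier (M\<lparr>carrier := B\<rparr>)" "b \<in> carrier (M\<lparr>carrier := B\<rparr>)" "c \<in> carrier (M\<lparr>carrier := B\<rparr>)"
    then have h: "a \<in> B" "b \<in> B" "c \<in> B" by auto
    then have h': "a \<in> A" "b \<in> A" "c \<in> A" using sub by auto
    show "a \<otimes>\<^bsub>M\<lparr>carrier := B\<rparr>\<^esub> (b \<otimes>\<^bsub>P\<lparr>carrier := B\<rparr>\<^esub> c) \<otimes>\<^bsub>P\<lparr>carrier := B\<rparr>\<^esub> a =
       a \<otimes>\<^bsub>M\<lparr>carrier := B\<rparr>\<^esub> b \<otimes>\<^bsub>P\<lparr>carrier := B\<rparr>\<^esub> (a \<otimes>\<^bsub>M\<lparr>carrier := B\<rparr>\<^esub> c)"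
      using br h' by simp
    have "(b \<boxplus> c) \<boxtimes> a = (b \<boxtimes> a \<boxplus> c \<boxtimes> a) \<boxplus> neg a" using h h' BR unfolding R_def by auto
    then show "(b \<otimes>\<^bsub>P\<lparr>carrier := B\<rparr>\<^esub> c) \<otimes>\<^bsub>M\<lparr>carrier := B\<rparr>\<^esub> a \<otimes>\<^bsub>P\<lparr>carrier := B\<rparr>\<^esub> a =
       b \<otimes>\<^bsub>M\<lparr>carrier := B\<rparr>\<^esub> a \<otimes>\<^bsub>P\<lparr>carrier := B\<rparr>\<^esub> (c \<otimes>\<^bsub>M\<lparr>carrier := B\<rparr>\<^esub> a)"
      using h' by (simp add: pax)
  qed
  have e: "B = {a \<in> A. \<forall>b\<in>A. \<forall>c\<in>A.
              inv\<^bsub>M\<^esub> a \<boxtimes> (b \<boxplus> c) \<boxtimes> a = (inv\<^bsub>M\<^esub> a \<boxtimes> b \<boxtimes> a) \<boxplus> (inv\<^bsub>M\<^esub> a \<boxtimes> c \<boxtimes> a)}"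
    unfolding B_def using conj_iff by auto
  show ?thesis using e sP sM ts by blast
qed

end
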